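(* Suppose each $f_v$ is $K_v$-Lipschitz and let $\bar K=\frac1{rn}\sum_vK_v$. If $\mathcal P$ is sampled uniformly from all partitions of $V(G)$ into $n$ (ordered) sets of size $r$ and $T=T_{\vec B,\mathcal P}$ with $\vec B$ independent of $\mathcal P$, then $$\mathbb E_{\mathcal P}\big|\mathbb E_{\vec B}(\xi\mid\mathcal P)\big|\le\frac{\bar K}{rn-1}.$$
   Context: Let $n,p,q$ be positive integers, $r=p+q$, $G$ a finite simple graph with $|V(G)|=rn$ and no isolated vertices; $\mathcal N(v)$, $d(v)$ neighbor set and degree. For each $v$, $f_v:2^{\mathcal N(v)}\to\mathbb R$ with $f_v(\emptyset)=0$. $\sigma_T(v)=q$ if $v\in T$, $-p$ otherwise; for $|T|=pn$, $\xi=\frac1{pqn}\sum_v\sigma_T(v)f_v(T\cap\mathcal N(v))$. $f_v$ is $K_v$-Lipschitz ($K_v>0$) if $|f_v(A)-f_v(A')|\le K_v|A\triangle A'|/d(v)$ for all $A,A'\subseteq\mathcal N(v)$. Restricted randomization: for $\mathcal P=(S_1,\dots,S_n)$, $S_i=\{w_i^1,\dots,w_i^r\}$, $B_i$ i.i.d. uniform $p$-subsets of $\{1,\dots,r\}$, $T_{\vec B,\mathcal P}=\{w_i^j:j\in B_i\}$. *)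

theory Defs
  imports Complex_Main "HOL-Library.FuncSet"
begin

text \<open>Simple graph on vertex set V given by a symmetric irreflexive relation E.\<close>

definition nbhd :: "'a set \<Rightarrow> ('a \<Rightarrow> 'a \<Rightarrow> bool) \<Rightarrow> 'a \<Rightarrow> 'a set" where
  "nbhd V E v = {u \<in> V. E v u}"

definition deg :: "'a set \<Rightarrow> ('a \<Rightarrow> 'a \<Rightarrow> bool) \<Rightarrow> 'a \<Rightarrow> nat" where
  "deg V E v = card (nbhd V E v)"

definition sigmaT :: "nat \<Rightarrow> nat \<Rightarrow> 'a set \<Rightarrow> 'a \<Rightarrow> real" where
  "sigmaT p q T v = (if v \<in> T then real q else - real p)"

definition xi :: "'a set \<Rightarrow> ('a \<Rightarrow> 'a \<Rightarrow> bool) \<Rightarrow> ('a \<Rightarrow> 'a set \<Rightarrow> real)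
    \<Rightarrow> nat \<Rightarrow> nat \<Rightarrow> nat \<Rightarrow> 'a set \<Rightarrow> real" where
  "xi V E f n p q T = (1 / (real p * real q * real n)) *
      (\<Sum>v\<in>V. sigmaT p q T v * f v (T \<inter> nbhd V E v))"

definition lipschitz_vertex :: "'a set \<Rightarrow> ('a \<Rightarrow> 'a \<Rightarrow> bool) \<Rightarrow> ('a \<Rightarrow> 'a set \<Rightarrow> real)
    \<Rightarrow> 'a \<Rightarrow> real \<Rightarrow> bool" where
  "lipschitz_vertex V E f v K \<longleftrightarrow>
     (\<forall>A A'. A \<subseteq> nbhd V E v \<longrightarrow> A' \<subseteq> nbhd V E v \<longrightarrow>
        \<bar>f v A - f v A'\<bar> \<le> K * real (card ((A - A') \<union> (A' - A))) / real (deg V E v))"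

text \<open>Ordered partitions (S_1,...,S_n) with S_i = {w_i^1,...,w_i^r}, encoded as
  bijections w : {..<n} \<times> {..<r} \<rightarrow> V (extensional), w(i,j) = w_i^j.\<close>
definition partitions :: "'a set \<Rightarrow> nat \<Rightarrow> nat \<Rightarrow> ((nat \<times> nat) \<Rightarrow> 'a) set" where
  "partitions V n r = {w \<in> ({..<n} \<times> {..<r}) \<rightarrow>\<^sub>E V. bij_betw w ({..<n} \<times> {..<r}) V}"

definition Bvecs :: "nat \<Rightarrow> nat \<Rightarrow> nat \<Rightarrow> (nat \<Rightarrow> nat set) set" where
  "Bvecs n r p = ({..<n} \<rightarrow>\<^sub>E {B. B \<subseteq> {..<r} \<and> card B = p})"

definition Tset :: "nat \<Rightarrow> (nat \<Rightarrow> nat set) \<Rightarrow> ((nat \<times> nat) \<Rightarrow> 'a) \<Rightarrow> 'a set" where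
  "Tset n B w = {w (i, j) | i j. i < n \<and> j \<in> B i}"

text \<open>E_B(xi | P): average over the uniform, independent B_i.\<close>
definition cond_exp_xi :: "'a set \<Rightarrow> ('a \<Rightarrow> 'a \<Rightarrow> bool) \<Rightarrow> ('a \<Rightarrow> 'a set \<Rightarrow> real)
    \<Rightarrow> nat \<Rightarrow> nat \<Rightarrow> nat \<Rightarrow> ((nat \<times> nat) \<Rightarrow> 'a) \<Rightarrow> real" where
  "cond_exp_xi V E f n p q w =
     (\<Sum>B\<in>Bvecs n (p + q) p. xi V E f n p q (Tset n B w)) / real (card (Bvecs n (p + q) p))"

end

theory Submission
  imports Defs
begin


lemma card_psub:
  assumes "p > 0" "p < r" "j < r" "k < r" "j \<noteq> k"
  shows "card {X. (X \<subseteq> {..<r} \<and> card X = p) \<and> j \<in> X \<and> k \<notin> X} = (r - 2) choose (p - 1)"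
proof -
  let ?Y = "{Y. Y \<subseteq> {..<r} - {j,k} \<and> card Y = p - 1}"
  have eq: "{X. (X \<subseteq> {..<r} \<and> card X = p) \<and> j \<in> X \<and> k \<notin> X} = insert j ` ?Y"
  proof (rule set_eqI, rule iffI)
    fix X assume X: "X \<in> {X. (X \<subseteq> {..<r} \<and> card X = p) \<and> j \<in> X \<and> k \<notin> X}"
    hence "finite X" using finite_subset by blast
    hence "X - {j} \<in> ?Y" using X by auto
    moreover have "X = insert j (X - {j})" using X by auto
    ultimately show "X \<in> insert j ` ?Y" by blast
  next
    fix X assume "X \<in> insert j ` ?Y"
    then obtain Y where Y: "Y \<in> ?Y" "X = insert j Y" by blast
    have "finite Y" using Y(1) finite_subset by blast
    have "j \<notin> Y" using Y(1) by auto
    then have "card X = p" using Y \<open>finite Y\<close> assms by simp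
    then show "X \<in> {X. (X \<subseteq> {..<r} \<and> card X = p) \<and> j \<in> X \<and> k \<notin> X}"
      using Y assms by auto
  qed
  have inj: "inj_on (insert j) ?Y"
    by (rule inj_onI) (metis Diff_iff insert_absorb insert_iff mem_Collect_eq subset_iff
        Diff_insert_absorb)
  have "card ({..<r} - {j,k}) = r - 2" using assms by (simp add: card_Diff_subset)
  then show ?thesis unfolding eq card_image[OF inj] using n_subsets[of "{..<r} - {j,k}" "p-1"] by simp
qed

lemma PiE_restr:
  assumes "i \<in> A"
  shows "{B\<in>PiE A S. P (B i)} = PiE A (\<lambda>l. if l = i then {X\<in>S i. P X} else S l)"
proof (rule set_eqI)
  fix B show "B \<in> {B\<in>PiE A S. P (B i)} \<longleftrightarrow> B \<in> PiE A (\<lambda>l. if l = i then {X\<in>S i. P X} else S l)"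
    using assms unfolding PiE_iff by (auto split: if_splits)
qed

lemma card_Bvecs_restr:
  assumes "i < n" "j < r" "k < r" "j \<noteq> k" "p > 0" "p < r"
  shows "card {B\<in>Bvecs n r p. j \<in> B i \<and> k \<notin> B i} * (r * (r - 1))
         = p * (r - p) * card (Bvecs n r p)"
proof -
  let ?Sp = "{X. X \<subseteq> {..<r} \<and> card X = p}"
  let ?S' = "{X \<in> {X. X \<subseteq> {..<r} \<and> card X = p}. j \<in> X \<and> k \<notin> X}"
  have S'eq: "?S' = {X. (X \<subseteq> {..<r} \<and> card X = p) \<and> j \<in> X \<and> k \<notin> X}" by blast
  have eq: "{B\<in>Bvecs n r p. j \<in> B i \<and> k \<notin> B i} = PiE {..<n} (\<lambda>l. if l = i then ?S' else ?Sp)"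
    using assms(1) PiE_restr[of i "{..<n}" "\<lambda>_. {X. X \<subseteq> {..<r} \<and> card X = p}" "\<lambda>X. j \<in> X \<and> k \<notin> X"]
    unfolding Bvecs_def by simp
  have c1: "card {B\<in>Bvecs n r p. j \<in> B i \<and> k \<notin> B i} = ((r-2) choose (p-1)) * (r choose p)^(n-1)"
  proof -
    have "card {B\<in>Bvecs n r p. j \<in> B i \<and> k \<notin> B i} = (\<Prod>l<n. card (if l = i then ?S' else ?Sp))"
      unfolding eq by (simp add: card_PiE)
    also have "\<dots> = (\<Prod>l<n. if l = i then (r-2) choose (p-1) else r choose p)"
      using card_psub[OF assms(5,6,2,3,4)] S'eq n_subsets[of "{..<r}" p]
      by (intro prod.cong) auto
    also have "\<dots> = ((r-2) choose (p-1)) * (r choose p)^(n-1)"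
    proof -
      have "{..<n} \<inter> - {i} = {..<n} - {i}" by blast
      then have "card ({..<n} \<inter> - {i}) = n - 1" using assms(1) by simp
      then show ?thesis using assms(1) by (simp add: prod.If_cases)
    qed
    finally show ?thesis .
  qed
  have c2: "card (Bvecs n r p) = (r choose p)^n"
    unfolding Bvecs_def using n_subsets[of "{..<r}" p] by (simp add: card_PiE)
  obtain r' where r': "r = Suc r'" using assms by (cases r) auto
  obtain p' where p': "p = Suc p'" using assms by (cases p) auto
  have b1: "r * (r' choose p') = (r choose p) * p" using Suc_times_binomial_eq[of r' p'] r' p' by simp
  have b2: "(r' - p') * (r' choose p') = r' * ((r' - 1) choose p')" by (rule binomial_absorb_comp)
  have rp: "r' - p' = r - p" "r - 2 = r' - 1" "p - 1 = p'" "r - 1 = r'" using r' p' by auto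
  have key: "((r-2) choose (p-1)) * (r * (r - 1)) = p * (r - p) * (r choose p)"
  proof -
    have "((r-2) choose (p-1)) * (r * (r - 1)) = r * (r' * ((r' - 1) choose p'))"
      using rp by (simp add: ac_simps)
    also have "\<dots> = r * ((r - p) * (r' choose p'))" using b2 rp by simp
    also have "\<dots> = (r - p) * (r * (r' choose p'))" by (simp add: ac_simps)
    also have "\<dots> = p * (r - p) * (r choose p)" using b1 by (simp add: ac_simps)
    finally show ?thesis .
  qed
  have n: "n = Suc (n - 1)" using assms by simp
  have pw: "(r choose p) * (r choose p)^(n-1) = (r choose p)^n"
    using n by (metis power_Suc)
  have "((r-2) choose (p-1)) * (r choose p)^(n-1) * (r * (r - 1))
      = (((r-2) choose (p-1)) * (r * (r - 1))) * (r choose p)^(n-1)" by (simp add: ac_simps)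
  also have "\<dots> = p * (r - p) * ((r choose p) * (r choose p)^(n-1))" unfolding key by (simp add: ac_simps)
  finally show ?thesis unfolding c1 c2 pw .
qed



lemma mem_Tset:
  assumes w: "inj_on w ({..<n} \<times> {..<r})" and B: "B \<in> Bvecs n r p" and "i < n" "j < r"
  shows "w (i, j) \<in> Tset n B w \<longleftrightarrow> j \<in> B i"
proof
  assume "w (i, j) \<in> Tset n B w"
  then obtain i' j' where ij: "w (i,j) = w (i',j')" "i' < n" "j' \<in> B i'" unfolding Tset_def by blast
  have "j' < r" using B ij unfolding Bvecs_def by (auto simp: PiE_iff)
  then have "(i,j) = (i',j')" using inj_onD[OF w ij(1)] ij assms by auto
  then show "j \<in> B i" using ij by simp
next
  assume "j \<in> B i" then show "w (i, j) \<in> Tset n B w" unfolding Tset_def using assms by blast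
qed

lemma Tset_swap:
  assumes w: "inj_on w ({..<n} \<times> {..<r})" and B: "B \<in> Bvecs n r p" and "i < n" "j \<in> B i" "k < r" "k \<notin> B i"
  shows "Tset n (B(i := insert k (B i - {j}))) w = insert (w (i,k)) (Tset n B w - {w (i,j)})"
proof -
  have Br: "\<And>i' j'. i' < n \<Longrightarrow> j' \<in> B i' \<Longrightarrow> j' < r" using B unfolding Bvecs_def by (auto simp: PiE_iff)
  have jr: "j < r" using Br assms by blast
  show ?thesis
  proof (rule set_eqI)
    fix x
    show "x \<in> Tset n (B(i := insert k (B i - {j}))) w \<longleftrightarrow> x \<in> insert (w (i,k)) (Tset n B w - {w (i,j)})"
    proof
      assume "x \<in> Tset n (B(i := insert k (B i - {j}))) w"
      then obtain i' j' where x: "x = w (i',j')" "i' < n" "j' \<in> (B(i := insert k (B i - {j}))) i'"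
        unfolding Tset_def by blast
      show "x \<in> insert (w (i,k)) (Tset n B w - {w (i,j)})"
      proof (cases "i' = i")
        case True
        then show ?thesis
        proof (cases "j' = k")
          case False
          then have "j' \<in> B i" "j' \<noteq> j" using x True by auto
          then have "x \<in> Tset n B w" "x \<noteq> w (i,j)"
            using x True inj_onD[OF w] Br[of i j'] jr assms unfolding Tset_def by fastforce+
          then show ?thesis by blast
        qed (use x in auto)
      next
        case False
        then have "j' \<in> B i'" using x by auto
        then have "x \<in> Tset n B w" "x \<noteq> w (i,j)"
          using x False inj_onD[OF w] Br[of i' j'] jr assms unfolding Tset_def by fastforce+
        then show ?thesis by blast
      qed
    next
      assume x: "x \<in> insert (w (i,k)) (Tset n B w - {w (i,j)})"
      show "x \<in> Tset n (B(i := insert k (B i - {j}))) w"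
      proof (cases "x = w (i,k)")
        case True then show ?thesis unfolding Tset_def using assms by fastforce
      next
        case False
        then obtain i' j' where x': "x = w (i',j')" "i' < n" "j' \<in> B i'" "x \<noteq> w (i,j)"
          using x unfolding Tset_def by blast
        then have "(i',j') \<noteq> (i,j)" by auto
        then have "j' \<in> (B(i := insert k (B i - {j}))) i'" using x' by auto
        then show ?thesis using x' unfolding Tset_def by blast
      qed
    qed
  qed
qed




lemma Bvecs_upd:
  assumes "B \<in> Bvecs n r p" "i < n" "X \<subseteq> {..<r}" "card X = p"
  shows "B(i := X) \<in> Bvecs n r p"
  using assms unfolding Bvecs_def by (auto simp: PiE_iff extensional_def)

lemma Bvecs_sub: "B \<in> Bvecs n r p \<Longrightarrow> i < n \<Longrightarrow> B i \<subseteq> {..<r} \<and> card (B i) = p"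
  unfolding Bvecs_def by (auto simp: PiE_iff)

lemma finite_Bvecs: "finite (Bvecs n r p)"
  unfolding Bvecs_def by (intro finite_PiE) auto

lemma swap_sum:
  fixes g :: "(nat \<Rightarrow> nat set) \<Rightarrow> real"
  assumes "i < n" "j < r" "r = p + q"
  defines "Bin \<equiv> {B\<in>Bvecs n r p. j \<in> B i}" and "Bout \<equiv> {B\<in>Bvecs n r p. j \<notin> B i}"
  shows "real q * (\<Sum>B\<in>Bin. g B) - real p * (\<Sum>B\<in>Bout. g B)
       = (\<Sum>k\<in>{..<r}-{j}. \<Sum>B\<in>{B\<in>Bin. k \<notin> B i}. g B - g (B(i := insert k (B i - {j}))))"
proof -
  have fin: "finite Bin" "finite Bout" unfolding Bin_def Bout_def using finite_Bvecs by auto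
  have s1: "(\<Sum>k\<in>{..<r}-{j}. \<Sum>B\<in>{B\<in>Bin. k \<notin> B i}. g B) = real q * (\<Sum>B\<in>Bin. g B)"
  proof -
    have "(\<Sum>k\<in>{..<r}-{j}. \<Sum>B\<in>{B\<in>Bin. k \<notin> B i}. g B)
        = (\<Sum>B\<in>Bin. \<Sum>k\<in>{k\<in>{..<r}-{j}. k \<notin> B i}. g B)"
      by (rule sum.swap_restrict[symmetric]) (use fin in auto)
    also have "\<dots> = (\<Sum>B\<in>Bin. real q * g B)"
    proof (rule sum.cong[OF refl])
      fix B assume "B \<in> Bin"
      then have Bi: "B i \<subseteq> {..<r}" "card (B i) = p" "j \<in> B i"
        using Bvecs_sub[of B n r p i] assms(1) unfolding Bin_def by auto
      have "{k\<in>{..<r}-{j}. k \<notin> B i} = {..<r} - B i" using Bi by auto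
      moreover have "card ({..<r} - B i) = q" using Bi assms(3)
        by (simp add: card_Diff_subset finite_subset)
      ultimately show "(\<Sum>k\<in>{k\<in>{..<r}-{j}. k \<notin> B i}. g B) = real q * g B" by simp
    qed
    finally show ?thesis by (simp add: sum_distrib_left)
  qed
  have s2: "(\<Sum>k\<in>{..<r}-{j}. \<Sum>B\<in>{B\<in>Bin. k \<notin> B i}. g (B(i := insert k (B i - {j}))))
      = real p * (\<Sum>B\<in>Bout. g B)"
  proof -
    have "(\<Sum>k\<in>{..<r}-{j}. \<Sum>B\<in>{B\<in>Bin. k \<notin> B i}. g (B(i := insert k (B i - {j}))))
        = (\<Sum>(k,B)\<in>(SIGMA k:{..<r}-{j}. {B\<in>Bin. k \<notin> B i}). g (B(i := insert k (B i - {j}))))"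
      by (rule sum.Sigma) (use fin in auto)
    also have "\<dots> = (\<Sum>(k,B)\<in>(SIGMA k:{..<r}-{j}. {B\<in>Bout. k \<in> B i}). g B)"
    proof (rule sum.reindex_bij_witness[where j = "\<lambda>(k,B). (k, B(i := insert k (B i - {j})))"
          and i = "\<lambda>(k,B). (k, B(i := insert j (B i - {k})))"])
      fix a assume a: "a \<in> (SIGMA k:{..<r}-{j}. {B\<in>Bin. k \<notin> B i})"
      then obtain k B where kB: "a = (k,B)" "k < r" "k \<noteq> j" "B \<in> Bvecs n r p" "j \<in> B i" "k \<notin> B i"
        unfolding Bin_def by auto
      have Bi: "B i \<subseteq> {..<r}" "card (B i) = p" using Bvecs_sub[OF kB(4) assms(1)] by auto
      have fB: "finite (B i)" using Bi finite_subset by blast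
      have e: "insert j (insert k (B i - {j}) - {k}) = B i" using kB by auto
      show "(\<lambda>(k,B). (k, B(i := insert j (B i - {k})))) ((\<lambda>(k,B). (k, B(i := insert k (B i - {j})))) a) = a"
        using kB e by auto
      have cc: "card (insert k (B i - {j})) = p" using kB Bi fB
        by (simp add: card_Diff_singleton) (metis Suc_pred card_gt_0_iff empty_iff)
      have sub: "insert k (B i - {j}) \<subseteq> {..<r}" using Bi kB assms(2) by auto
      have "B(i := insert k (B i - {j})) \<in> Bvecs n r p"
        by (rule Bvecs_upd[OF kB(4) assms(1) sub cc])
      then show "(\<lambda>(k,B). (k, B(i := insert k (B i - {j})))) a \<in> (SIGMA k:{..<r}-{j}. {B\<in>Bout. k \<in> B i})"
        using kB unfolding Bout_def by auto
      show "(case (\<lambda>(k,B). (k, B(i := insert k (B i - {j})))) a of (k, B) \<Rightarrow> g B) =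
            (case a of (k, B) \<Rightarrow> g (B(i := insert k (B i - {j}))))" using kB by simp
    next
      fix b assume b: "b \<in> (SIGMA k:{..<r}-{j}. {B\<in>Bout. k \<in> B i})"
      then obtain k B where kB: "b = (k,B)" "k < r" "k \<noteq> j" "B \<in> Bvecs n r p" "j \<notin> B i" "k \<in> B i"
        unfolding Bout_def by auto
      have Bi: "B i \<subseteq> {..<r}" "card (B i) = p" using Bvecs_sub[OF kB(4) assms(1)] by auto
      have fB: "finite (B i)" using Bi finite_subset by blast
      have e: "insert k (insert j (B i - {k}) - {j}) = B i" using kB by auto
      show "(\<lambda>(k,B). (k, B(i := insert k (B i - {j})))) ((\<lambda>(k,B). (k, B(i := insert j (B i - {k})))) b) = b"
        using kB e by auto
      have cc: "card (insert j (B i - {k})) = p" using kB Bi fB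
        by (simp add: card_Diff_singleton) (metis Suc_pred card_gt_0_iff empty_iff)
      have sub: "insert j (B i - {k}) \<subseteq> {..<r}" using Bi kB assms(2) by auto
      have "B(i := insert j (B i - {k})) \<in> Bvecs n r p"
        by (rule Bvecs_upd[OF kB(4) assms(1) sub cc])
      then show "(\<lambda>(k,B). (k, B(i := insert j (B i - {k})))) b \<in> (SIGMA k:{..<r}-{j}. {B\<in>Bin. k \<notin> B i})"
        using kB unfolding Bin_def by auto
    qed
    also have "\<dots> = (\<Sum>k\<in>{..<r}-{j}. \<Sum>B\<in>{B\<in>Bout. k \<in> B i}. g B)"
      by (rule sum.Sigma[symmetric]) (use fin in auto)
    also have "\<dots> = (\<Sum>B\<in>Bout. \<Sum>k\<in>{k\<in>{..<r}-{j}. k \<in> B i}. g B)"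
      by (rule sum.swap_restrict) (use fin in auto)
    also have "\<dots> = (\<Sum>B\<in>Bout. real p * g B)"
    proof (rule sum.cong[OF refl])
      fix B assume "B \<in> Bout"
      then have Bi: "B i \<subseteq> {..<r}" "card (B i) = p" "j \<notin> B i"
        using Bvecs_sub[of B n r p i] assms(1) unfolding Bout_def by auto
      have "{k\<in>{..<r}-{j}. k \<in> B i} = B i" using Bi by auto
      then show "(\<Sum>k\<in>{k\<in>{..<r}-{j}. k \<in> B i}. g B) = real p * g B" using Bi by simp
    qed
    finally show ?thesis by (simp add: sum_distrib_left)
  qed
  show ?thesis unfolding sum_subtractf s1 s2 ..
qed




lemma pos_bound:
  assumes w: "inj_on w ({..<n} \<times> {..<r})" "w ` ({..<n} \<times> {..<r}) \<subseteq> V"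
    and r: "r = p + q" and ij: "i < n" "j < r"
    and lip: "lipschitz_vertex V E f (w (i,j)) Kv" and Kv: "Kv \<ge> 0"
    and dpos: "deg V E (w (i,j)) > 0" and irr: "\<not> E (w (i,j)) (w (i,j))"
  shows "\<bar>\<Sum>B\<in>Bvecs n r p. sigmaT p q (Tset n B w) (w (i,j)) * f (w (i,j)) (Tset n B w \<inter> nbhd V E (w (i,j)))\<bar>
     \<le> (\<Sum>k\<in>{..<r}-{j}. real (card {B\<in>Bvecs n r p. j \<in> B i \<and> k \<notin> B i}) *
            (Kv / real (deg V E (w (i,j))) * (if E (w (i,j)) (w (i,k)) then 1 else 0)))"
proof -
  define v where "v = w (i,j)"
  define N where "N = nbhd V E v"
  define g where "g B = f v (Tset n B w \<inter> N)" for B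
  define Bin where "Bin = {B\<in>Bvecs n r p. j \<in> B i}"
  define Bout where "Bout = {B\<in>Bvecs n r p. j \<notin> B i}"
  define c where "c k = Kv / real (deg V E v) * (if E v (w (i,k)) then 1 else 0)" for k
  have "(\<Sum>B\<in>Bvecs n r p. sigmaT p q (Tset n B w) v * g B)
      = (\<Sum>B\<in>Bvecs n r p. if j \<in> B i then real q * g B else - real p * g B)"
    by (rule sum.cong[OF refl]) (simp add: sigmaT_def mem_Tset[OF w(1) _ ij] v_def)
  also have "\<dots> = (\<Sum>B\<in>Bin. real q * g B) + (\<Sum>B\<in>Bout. - real p * g B)"
  proof -
    have "Bvecs n r p \<inter> {x. j \<in> x i} = Bin" "Bvecs n r p \<inter> - {x. j \<in> x i} = Bout"
      unfolding Bin_def Bout_def by auto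
    then show ?thesis by (subst sum.If_cases) (auto simp: finite_Bvecs)
  qed
  also have "\<dots> = real q * (\<Sum>B\<in>Bin. g B) - real p * (\<Sum>B\<in>Bout. g B)"
    by (simp add: sum_distrib_left sum_negf)
  also have "\<dots> = (\<Sum>k\<in>{..<r}-{j}. \<Sum>B\<in>{B\<in>Bin. k \<notin> B i}. g B - g (B(i := insert k (B i - {j}))))"
    unfolding Bin_def Bout_def by (rule swap_sum[OF ij r])
  finally have eq: "(\<Sum>B\<in>Bvecs n r p. sigmaT p q (Tset n B w) v * g B) = \<dots>" .
  have bnd: "\<bar>g B - g (B(i := insert k (B i - {j})))\<bar> \<le> c k"
    if k: "k \<in> {..<r}-{j}" and B: "B \<in> {B\<in>Bin. k \<notin> B i}" for k B
  proof -
    have kB: "k < r" "B \<in> Bvecs n r p" "j \<in> B i" "k \<notin> B i" using k B unfolding Bin_def by auto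
    have Ts: "Tset n (B(i := insert k (B i - {j}))) w = insert (w (i,k)) (Tset n B w - {v})"
      unfolding v_def by (rule Tset_swap[OF w(1) kB(2) ij(1) kB(3) kB(1) kB(4)])
    have vN: "v \<notin> N" using irr unfolding N_def nbhd_def v_def by auto
    have wkV: "w (i,k) \<in> V" using w(2) ij kB by auto
    let ?A = "Tset n B w \<inter> N" and ?A' = "Tset n (B(i := insert k (B i - {j}))) w \<inter> N"
    have sd: "(?A - ?A') \<union> (?A' - ?A) \<subseteq> {w (i,k)} \<inter> N" unfolding Ts using vN by auto
    have "card ((?A - ?A') \<union> (?A' - ?A)) \<le> card ({w (i,k)} \<inter> N)"
      by (rule card_mono[OF _ sd]) auto
    also have "card ({w (i,k)} \<inter> N) = (if E v (w (i,k)) then 1 else 0)"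
      using wkV unfolding N_def nbhd_def by auto
    finally have cd: "real (card ((?A - ?A') \<union> (?A' - ?A))) \<le> (if E v (w (i,k)) then 1 else 0)"
      by (auto split: if_splits)
    have "\<bar>g B - g (B(i := insert k (B i - {j})))\<bar> \<le> Kv * real (card ((?A - ?A') \<union> (?A' - ?A))) / real (deg V E v)"
      using lip unfolding lipschitz_vertex_def g_def N_def v_def by blast
    also have "\<dots> \<le> Kv * (if E v (w (i,k)) then 1 else 0) / real (deg V E v)"
      using cd Kv dpos unfolding v_def by (intro divide_right_mono mult_left_mono) auto
    finally show ?thesis unfolding c_def by simp
  qed
  have "\<bar>\<Sum>k\<in>{..<r}-{j}. \<Sum>B\<in>{B\<in>Bin. k \<notin> B i}. g B - g (B(i := insert k (B i - {j})))\<bar>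
      \<le> (\<Sum>k\<in>{..<r}-{j}. \<bar>\<Sum>B\<in>{B\<in>Bin. k \<notin> B i}. g B - g (B(i := insert k (B i - {j})))\<bar>)"
    by (rule sum_abs)
  also have "\<dots> \<le> (\<Sum>k\<in>{..<r}-{j}. \<Sum>B\<in>{B\<in>Bin. k \<notin> B i}. c k)"
  proof (rule sum_mono)
    fix k assume k: "k \<in> {..<r}-{j}"
    have "\<bar>\<Sum>B\<in>{B\<in>Bin. k \<notin> B i}. g B - g (B(i := insert k (B i - {j})))\<bar>
        \<le> (\<Sum>B\<in>{B\<in>Bin. k \<notin> B i}. \<bar>g B - g (B(i := insert k (B i - {j})))\<bar>)" by (rule sum_abs)
    also have "\<dots> \<le> (\<Sum>B\<in>{B\<in>Bin. k \<notin> B i}. c k)" by (rule sum_mono) (rule bnd[OF k])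
    finally show "\<bar>\<Sum>B\<in>{B\<in>Bin. k \<notin> B i}. g B - g (B(i := insert k (B i - {j})))\<bar> \<le> (\<Sum>B\<in>{B\<in>Bin. k \<notin> B i}. c k)" .
  qed
  also have "\<dots> = (\<Sum>k\<in>{..<r}-{j}. real (card {B\<in>Bvecs n r p. j \<in> B i \<and> k \<notin> B i}) * c k)"
  proof (rule sum.cong[OF refl])
    fix k
    have "{B\<in>Bin. k \<notin> B i} = {B\<in>Bvecs n r p. j \<in> B i \<and> k \<notin> B i}" unfolding Bin_def by auto
    then show "(\<Sum>B\<in>{B\<in>Bin. k \<notin> B i}. c k) = real (card {B\<in>Bvecs n r p. j \<in> B i \<and> k \<notin> B i}) * c k"
      by simp
  qed
  finally show ?thesis using eq unfolding c_def g_def N_def v_def by simp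
qed




definition tr :: "'a \<Rightarrow> 'a \<Rightarrow> 'a \<Rightarrow> 'a" where
  "tr a b c = (if c = a then b else if c = b then a else c)"

lemma bij_tr: "a \<in> V \<Longrightarrow> b \<in> V \<Longrightarrow> bij_betw (tr a b) V V"
  unfolding bij_betw_def inj_on_def tr_def by (auto simp: image_iff)


lemma exists_bij_pair:
  assumes "x \<in> V" "y \<in> V" "x \<noteq> y" "x' \<in> V" "y' \<in> V" "x' \<noteq> y'"
  shows "\<exists>\<sigma>. bij_betw \<sigma> V V \<and> \<sigma> x = x' \<and> \<sigma> y = y'"
proof -
  define t1 where "t1 = tr x x'"
  define y1 where "y1 = t1 y"
  define t2 where "t2 = tr y1 y'"
  have b1: "bij_betw t1 V V" unfolding t1_def using assms by (simp add: bij_tr)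
  have y1V: "y1 \<in> V" using b1 assms unfolding y1_def by (meson bij_betwE)
  have b2: "bij_betw t2 V V" unfolding t2_def using assms y1V by (simp add: bij_tr)
  have y1x': "y1 \<noteq> x'" unfolding y1_def t1_def using assms by (auto simp: tr_def)
  have "t2 (t1 x) = x'" unfolding t2_def t1_def using y1x' assms by (auto simp: tr_def)
  moreover have "t2 (t1 y) = y'" unfolding t2_def y1_def by (simp add: tr_def)
  ultimately show ?thesis using bij_betw_trans[OF b1 b2] by (intro exI[of _ "t2 \<circ> t1"]) auto
qed

lemma fiber_le:
  assumes "bij_betw \<sigma> V V" "\<sigma> x = x'" "\<sigma> y = y'" "finite I" "finite V" "a \<in> I" "b \<in> I"
  shows "card {w\<in>{w\<in>I \<rightarrow>\<^sub>E V. bij_betw w I V}. w a = x \<and> w b = y}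
       \<le> card {w\<in>{w\<in>I \<rightarrow>\<^sub>E V. bij_betw w I V}. w a = x' \<and> w b = y'}"
proof (rule card_inj_on_le[where f = "\<lambda>w. restrict (\<sigma> \<circ> w) I"])
  show "finite {w\<in>{w\<in>I \<rightarrow>\<^sub>E V. bij_betw w I V}. w a = x' \<and> w b = y'}"
    using assms by (intro finite_subset[OF _ finite_PiE[of I "\<lambda>_. V"]]) auto
  show "inj_on (\<lambda>w. restrict (\<sigma> \<circ> w) I) {w\<in>{w\<in>I \<rightarrow>\<^sub>E V. bij_betw w I V}. w a = x \<and> w b = y}"
  proof (rule inj_onI)
    fix w1 w2 assume w1: "w1 \<in> {w\<in>{w\<in>I \<rightarrow>\<^sub>E V. bij_betw w I V}. w a = x \<and> w b = y}"
      and w2: "w2 \<in> {w\<in>{w\<in>I \<rightarrow>\<^sub>E V. bij_betw w I V}. w a = x \<and> w b = y}"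
      and eq: "restrict (\<sigma> \<circ> w1) I = restrict (\<sigma> \<circ> w2) I"
    show "w1 = w2"
    proof (rule extensionalityI[of _ I])
      show "w1 \<in> extensional I" "w2 \<in> extensional I" using w1 w2 by (auto simp: PiE_def)
      fix z assume z: "z \<in> I"
      then have "\<sigma> (w1 z) = \<sigma> (w2 z)" using fun_cong[OF eq, of z] by simp
      moreover have "w1 z \<in> V" "w2 z \<in> V" using w1 w2 z by auto
      ultimately show "w1 z = w2 z" using assms(1) by (meson bij_betw_imp_inj_on inj_onD)
    qed
  qed
  show "(\<lambda>w. restrict (\<sigma> \<circ> w) I) ` {w\<in>{w\<in>I \<rightarrow>\<^sub>E V. bij_betw w I V}. w a = x \<and> w b = y}
        \<subseteq> {w\<in>{w\<in>I \<rightarrow>\<^sub>E V. bij_betw w I V}. w a = x' \<and> w b = y'}"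
  proof
    fix u assume "u \<in> (\<lambda>w. restrict (\<sigma> \<circ> w) I) ` {w\<in>{w\<in>I \<rightarrow>\<^sub>E V. bij_betw w I V}. w a = x \<and> w b = y}"
    then obtain w where w: "w \<in> I \<rightarrow>\<^sub>E V" "bij_betw w I V" "w a = x" "w b = y" "u = restrict (\<sigma> \<circ> w) I"
      by auto
    have "bij_betw (\<sigma> \<circ> w) I V" using bij_betw_trans[OF w(2) assms(1)] .
    then have bu: "bij_betw u I V" unfolding w(5) by (rule bij_betw_cong[THEN iffD1, rotated]) auto
    have "u \<in> I \<rightarrow>\<^sub>E V" unfolding w(5) using w(1) assms(1) by (auto simp: bij_betw_def PiE_iff)
    moreover have "u a = x'" "u b = y'" using w assms by auto
    ultimately show "u \<in> {w\<in>{w\<in>I \<rightarrow>\<^sub>E V. bij_betw w I V}. w a = x' \<and> w b = y'}" using bu by auto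
  qed
qed




lemma card_offdiag:
  assumes "finite V"
  shows "card {(x,y)\<in>V\<times>V. x \<noteq> y} = card V * (card V - 1)"
proof -
  have "{(x,y)\<in>V\<times>V. x \<noteq> y} = (V \<times> V) - (\<lambda>x. (x,x)) ` V" by auto
  moreover have "card ((\<lambda>x. (x,x)) ` V) = card V" by (rule card_image) (auto simp: inj_on_def)
  moreover have "card ((V \<times> V) - (\<lambda>x. (x,x)) ` V) = card (V \<times> V) - card ((\<lambda>x. (x,x)) ` V)"
    by (rule card_Diff_subset) (use assms in auto)
  ultimately have "card {(x,y)\<in>V\<times>V. x \<noteq> y} = card V * card V - card V"
    by (simp add: card_cartesian_product)
  then show ?thesis by (simp add: diff_mult_distrib2)
qed

lemma fiber_sum:
  fixes \<phi> :: "'a \<Rightarrow> 'a \<Rightarrow> real"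
  assumes fin: "finite V" "finite I" and ab: "a \<in> I" "b \<in> I" "a \<noteq> b"
  shows "(\<Sum>w\<in>{w\<in>I \<rightarrow>\<^sub>E V. bij_betw w I V}. \<phi> (w a) (w b)) * real (card V * (card V - 1))
       = real (card {w\<in>I \<rightarrow>\<^sub>E V. bij_betw w I V}) * (\<Sum>(x,y)\<in>{(x,y)\<in>V\<times>V. x \<noteq> y}. \<phi> x y)"
proof -
  define P where "P = {w\<in>I \<rightarrow>\<^sub>E V. bij_betw w I V}"
  define D where "D = {(x,y)\<in>V\<times>V. x \<noteq> y}"
  define F where "F d = {w\<in>P. (w a, w b) = d}" for d
  have finP: "finite P" unfolding P_def using fin by (intro finite_subset[OF _ finite_PiE[of I "\<lambda>_. V"]]) auto
  have finD: "finite D" unfolding D_def using fin by (intro finite_subset[OF _ finite_cartesian_product[of V V]]) auto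
  have img: "(\<lambda>w. (w a, w b)) ` P \<subseteq> D"
  proof
    fix d assume "d \<in> (\<lambda>w. (w a, w b)) ` P"
    then obtain w where "w \<in> P" "d = (w a, w b)" by auto
    then show "d \<in> D" unfolding P_def D_def using ab
      by (auto simp: bij_betw_def inj_on_def)
  qed
  have Feq: "card (F d) = card (F d')" if "d \<in> D" "d' \<in> D" for d d'
  proof -
    have le: "card (F d) \<le> card (F d')" if dd: "d \<in> D" "d' \<in> D" for d d'
    proof -
      obtain x y x' y' where xy: "d = (x,y)" "d' = (x',y')" by fastforce
      obtain \<sigma> where s: "bij_betw \<sigma> V V" "\<sigma> x = x'" "\<sigma> y = y'"
        using exists_bij_pair[of x V y x' y'] dd xy unfolding D_def by auto
      show ?thesis using fiber_le[OF s fin(2) fin(1) ab(1,2)] xy unfolding F_def P_def by simp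
    qed
    show ?thesis using le[OF that] le[OF that(2,1)] by simp
  qed
  show ?thesis
  proof (cases "D = {}")
    case True
    then have "card D = 0" by simp
    then have "card V * (card V - 1) = 0" using card_offdiag[OF fin(1)] unfolding D_def by simp
    then show ?thesis using True unfolding P_def[symmetric] D_def[symmetric] by simp
  next
    case False
    then obtain d0 where d0: "d0 \<in> D" by blast
    define m where "m = card (F d0)"
    have Fm: "card (F d) = m" if "d \<in> D" for d using Feq[OF that d0] unfolding m_def .
    have s1: "(\<Sum>w\<in>P. \<phi> (w a) (w b)) = real m * (\<Sum>(x,y)\<in>D. \<phi> x y)"
    proof -
      have "(\<Sum>w\<in>P. \<phi> (w a) (w b)) = (\<Sum>d\<in>D. \<Sum>w\<in>{w\<in>P. (w a, w b) = d}. \<phi> (w a) (w b))"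
        by (rule sum.group[symmetric, OF finP finD img])
      also have "\<dots> = (\<Sum>d\<in>D. real m * (case d of (x,y) \<Rightarrow> \<phi> x y))"
      proof (rule sum.cong[OF refl])
        fix d assume d: "d \<in> D"
        have "(\<Sum>w\<in>{w\<in>P. (w a, w b) = d}. \<phi> (w a) (w b)) = (\<Sum>w\<in>F d. (case d of (x,y) \<Rightarrow> \<phi> x y))"
          unfolding F_def by (rule sum.cong) auto
        then show "(\<Sum>w\<in>{w\<in>P. (w a, w b) = d}. \<phi> (w a) (w b)) = real m * (case d of (x,y) \<Rightarrow> \<phi> x y)"
          using Fm[OF d] by simp
      qed
      finally show ?thesis by (simp add: sum_distrib_left)
    qed
    have s2: "real (card P) = real m * real (card D)"
    proof -
      have "real (card P) = (\<Sum>w\<in>P. (1::real))" by simp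
      also have "\<dots> = (\<Sum>d\<in>D. \<Sum>w\<in>{w\<in>P. (w a, w b) = d}. (1::real))"
        by (rule sum.group[symmetric, OF finP finD img])
      also have "\<dots> = (\<Sum>d\<in>D. real m)" using Fm unfolding F_def by (intro sum.cong) auto
      finally show ?thesis by simp
    qed
    have cD: "card D = card V * (card V - 1)" unfolding D_def by (rule card_offdiag[OF fin(1)])
    show ?thesis unfolding P_def[symmetric] D_def[symmetric] s1 s2 cD[symmetric] by simp
  qed
qed




lemma per_w:
  fixes V :: "'a set" and K :: "'a \<Rightarrow> real"
  assumes r: "r = p + q" and pq: "p > 0" "q > 0" "n > 0"
    and w: "bij_betw w ({..<n} \<times> {..<r}) V"
    and irr: "\<And>v. \<not> E v v"
    and dpos: "\<And>v. v \<in> V \<Longrightarrow> deg V E v > 0"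
    and Kp: "\<And>v. v \<in> V \<Longrightarrow> K v > 0"
    and lip: "\<And>v. v \<in> V \<Longrightarrow> lipschitz_vertex V E f v (K v)"
  shows "\<bar>cond_exp_xi V E f n p q w\<bar> \<le> (1 / (real n * real r * (real r - 1))) *
     (\<Sum>((i,j),k)\<in>(SIGMA (i,j):{..<n} \<times> {..<r}. {..<r}-{j}).
        K (w (i,j)) / real (deg V E (w (i,j))) * (if E (w (i,j)) (w (i,k)) then 1 else 0))"
proof -
  define I where "I = {..<n} \<times> {..<r}"
  define Bv where "Bv = Bvecs n r p"
  define h where "h v B = sigmaT p q (Tset n B w) v * f v (Tset n B w \<inter> nbhd V E v)" for v B
  define phi where "phi x y = K x / real (deg V E x) * (if E x y then 1 else 0)" for x y
  define c where "c = real (card Bv)"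
  have r2: "r \<ge> 2" using r pq by simp
  have finBv: "finite Bv" unfolding Bv_def by (rule finite_Bvecs)
  have cpos: "c > 0"
  proof -
    have "card Bv = (r choose p)^n" unfolding Bv_def Bvecs_def using n_subsets[of "{..<r}" p]
      by (simp add: card_PiE)
    moreover have "r choose p > 0" using r by simp
    ultimately show ?thesis unfolding c_def by simp
  qed
  have winj: "inj_on w I" and wV: "w ` I \<subseteq> V" using w unfolding I_def bij_betw_def by auto
  have cN: "real (card {B\<in>Bv. j \<in> B i \<and> k \<notin> B i}) = real p * real q * c / (real r * (real r - 1))"
    if "i < n" "j < r" "k < r" "j \<noteq> k" for i j k
  proof -
    have "card {B\<in>Bv. j \<in> B i \<and> k \<notin> B i} * (r * (r - 1)) = p * q * card Bv"
      using card_Bvecs_restr[OF that, of p] pq r unfolding Bv_def by simp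
    then have "real (card {B\<in>Bv. j \<in> B i \<and> k \<notin> B i}) * (real r * (real r - 1)) = real p * real q * c"
    proof -
      have e: "real (r - 1) = real r - 1" using r2 by simp
      have "real (card {B\<in>Bv. j \<in> B i \<and> k \<notin> B i} * (r * (r - 1))) = real (p * q * card Bv)"
        using \<open>card {B\<in>Bv. j \<in> B i \<and> k \<notin> B i} * (r * (r - 1)) = p * q * card Bv\<close> by (rule arg_cong)
      then show ?thesis unfolding c_def of_nat_mult e .
    qed
    moreover have D: "real r * (real r - 1) \<noteq> 0" using r2 by simp
    ultimately show ?thesis by (simp only: nonzero_eq_divide_eq[OF D])
  qed
  have "cond_exp_xi V E f n p q w = (\<Sum>B\<in>Bv. (1 / (real p * real q * real n)) * (\<Sum>v\<in>V. h v B)) / c"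
    unfolding cond_exp_xi_def xi_def Bv_def c_def h_def r by simp
  also have "\<dots> = (1 / (real p * real q * real n * c)) * (\<Sum>v\<in>V. \<Sum>B\<in>Bv. h v B)"
    by (simp add: sum_divide_distrib[symmetric] sum.swap[of _ Bv V])
  also have "(\<Sum>v\<in>V. \<Sum>B\<in>Bv. h v B) = (\<Sum>(i,j)\<in>I. \<Sum>B\<in>Bv. h (w (i,j)) B)"
    using sum.reindex_bij_betw[OF w[folded I_def], of "\<lambda>v. \<Sum>B\<in>Bv. h v B"] by (simp add: case_prod_unfold)
  finally have ce: "cond_exp_xi V E f n p q w = (1 / (real p * real q * real n * c)) * (\<Sum>(i,j)\<in>I. \<Sum>B\<in>Bv. h (w (i,j)) B)" .
  have pb: "\<bar>\<Sum>B\<in>Bv. h (w (i,j)) B\<bar> \<le> (real p * real q * c / (real r * (real r - 1))) *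
       (\<Sum>k\<in>{..<r}-{j}. phi (w (i,j)) (w (i,k)))" if ij: "(i,j) \<in> I" for i j
  proof -
    have ij': "i < n" "j < r" using ij unfolding I_def by auto
    have wij: "w (i,j) \<in> V" using wV ij by auto
    have "\<bar>\<Sum>B\<in>Bv. h (w (i,j)) B\<bar> \<le> (\<Sum>k\<in>{..<r}-{j}. real (card {B\<in>Bv. j \<in> B i \<and> k \<notin> B i}) * phi (w (i,j)) (w (i,k)))"
      unfolding h_def Bv_def phi_def
      by (rule pos_bound[OF winj[unfolded I_def] wV[unfolded I_def] r ij' lip[OF wij]])
         (use Kp[OF wij] dpos[OF wij] irr in auto)
    also have "\<dots> = (\<Sum>k\<in>{..<r}-{j}. (real p * real q * c / (real r * (real r - 1))) * phi (w (i,j)) (w (i,k)))"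
      by (rule sum.cong[OF refl]) (use cN ij' in auto)
    finally show ?thesis by (simp add: sum_distrib_left)
  qed
  have "\<bar>cond_exp_xi V E f n p q w\<bar> = (1 / (real p * real q * real n * c)) * \<bar>\<Sum>(i,j)\<in>I. \<Sum>B\<in>Bv. h (w (i,j)) B\<bar>"
    unfolding ce using cpos pq by (simp add: abs_mult)
  also have "\<dots> \<le> (1 / (real p * real q * real n * c)) * (\<Sum>(i,j)\<in>I. (real p * real q * c / (real r * (real r - 1))) *
       (\<Sum>k\<in>{..<r}-{j}. phi (w (i,j)) (w (i,k))))"
  proof (rule mult_left_mono)
    show "0 \<le> 1 / (real p * real q * real n * c)" using cpos by simp
    have "\<bar>\<Sum>(i,j)\<in>I. \<Sum>B\<in>Bv. h (w (i,j)) B\<bar> \<le> (\<Sum>(i,j)\<in>I. \<bar>\<Sum>B\<in>Bv. h (w (i,j)) B\<bar>)"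
      by (rule order_trans[OF sum_abs]) (simp add: case_prod_unfold)
    also have "\<dots> \<le> (\<Sum>(i,j)\<in>I. (real p * real q * c / (real r * (real r - 1))) * (\<Sum>k\<in>{..<r}-{j}. phi (w (i,j)) (w (i,k))))"
      by (rule sum_mono) (use pb in auto)
    finally show "\<bar>\<Sum>(i,j)\<in>I. \<Sum>B\<in>Bv. h (w (i,j)) B\<bar> \<le> \<dots>" .
  qed
  also have "\<dots> = (1 / (real n * real r * (real r - 1))) * (\<Sum>(i,j)\<in>I. \<Sum>k\<in>{..<r}-{j}. phi (w (i,j)) (w (i,k)))"
  proof -
    have sc: "(1 / (real p * real q * real n * c)) * (real p * real q * c / (real r * (real r - 1)))
        = 1 / (real n * real r * (real r - 1))" using cpos pq by (simp add: field_simps)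
    have "(\<Sum>(i,j)\<in>I. (real p * real q * c / (real r * (real r - 1))) * (\<Sum>k\<in>{..<r}-{j}. phi (w (i,j)) (w (i,k))))
       = (real p * real q * c / (real r * (real r - 1))) * (\<Sum>(i,j)\<in>I. \<Sum>k\<in>{..<r}-{j}. phi (w (i,j)) (w (i,k)))"
      by (simp add: sum_distrib_left case_prod_unfold)
    then show ?thesis using sc by (metis (no_types, lifting) mult.assoc)
  qed
  also have "(\<Sum>(i,j)\<in>I. \<Sum>k\<in>{..<r}-{j}. phi (w (i,j)) (w (i,k)))
      = (\<Sum>((i,j),k)\<in>(SIGMA (i,j):I. {..<r}-{j}). phi (w (i,j)) (w (i,k)))"
  proof -
    have "(\<Sum>(i,j)\<in>I. \<Sum>k\<in>{..<r}-{j}. phi (w (i,j)) (w (i,k)))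
        = (\<Sum>x\<in>I. \<Sum>k\<in>(\<lambda>(i,j). {..<r}-{j}) x. phi (w x) (w (fst x, k)))"
      by (rule sum.cong) auto
    also have "\<dots> = (\<Sum>(x,k)\<in>(SIGMA x:I. (\<lambda>(i,j). {..<r}-{j}) x). phi (w x) (w (fst x, k)))"
      by (rule sum.Sigma) (auto simp: I_def)
    also have "\<dots> = (\<Sum>((i,j),k)\<in>(SIGMA (i,j):I. {..<r}-{j}). phi (w (i,j)) (w (i,k)))"
      by (rule sum.cong) auto
    finally show ?thesis .
  qed
  finally show ?thesis unfolding phi_def I_def .
qed




theorem mainTheorem12:
  fixes V :: "'a set" and E :: "'a \<Rightarrow> 'a \<Rightarrow> bool"
    and f :: "'a \<Rightarrow> 'a set \<Rightarrow> real" and K :: "'a \<Rightarrow> real"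
    and n p q :: nat
  assumes "n > 0" "p > 0" "q > 0"
    and "finite V" "card V = (p + q) * n"
    and "\<And>u v. E u v \<Longrightarrow> u \<in> V \<and> v \<in> V"
    and "\<And>u v. E u v \<Longrightarrow> E v u"
    and "\<And>v. \<not> E v v"
    and "\<And>v. v \<in> V \<Longrightarrow> \<exists>u. E v u"
    and "\<And>v. v \<in> V \<Longrightarrow> f v {} = 0"
    and "\<And>v. v \<in> V \<Longrightarrow> K v > 0"
    and "\<And>v. v \<in> V \<Longrightarrow> lipschitz_vertex V E f v (K v)"
  shows "(\<Sum>w\<in>partitions V n (p + q). \<bar>cond_exp_xi V E f n p q w\<bar>)
            / real (card (partitions V n (p + q)))
         \<le> ((\<Sum>v\<in>V. K v) / real ((p + q) * n)) / (real ((p + q) * n) - 1)"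
proof -
  note pq = assms(1,2,3) and finV = assms(4) and cV = assms(5) and EV = assms(6)
    and irr = assms(8) and ex = assms(9) and Kp = assms(11) and lip = assms(12)
  define r where "r = p + q"
  define I where "I = {..<n} \<times> {..<r}"
  define P where "P = partitions V n r"
  define N where "N = card V"
  define J where "J = (SIGMA (i,j):I. {..<r}-{j})"
  define phi where "phi x y = K x / real (deg V E x) * (if E x y then 1 else 0)" for x y
  define S where "S = (\<Sum>v\<in>V. K v)"
  have r2: "r \<ge> 2" using pq unfolding r_def by simp
  have NN: "N = r * n" unfolding N_def r_def using cV by simp
  have "r \<le> r * n" using pq by simp
  then have "N \<ge> 2" using r2 NN by linarith
  then have N2: "real N \<ge> 2" by simp
  have finI: "finite I" unfolding I_def by simp
  have dpos: "deg V E v > 0" if vV: "v \<in> V" for v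
  proof -
    obtain u where "E v u" using ex[OF vV] by blast
    then have "u \<in> nbhd V E v" using EV unfolding nbhd_def by auto
    moreover have "finite (nbhd V E v)" using finV unfolding nbhd_def by simp
    ultimately show ?thesis unfolding deg_def by (auto simp: card_gt_0_iff)
  qed
  have Pdef: "P = {w\<in>I \<rightarrow>\<^sub>E V. bij_betw w I V}" unfolding P_def partitions_def I_def ..
  have finP: "finite P" unfolding Pdef using finV finI
    by (intro finite_subset[OF _ finite_PiE[of I "\<lambda>_. V"]]) auto
  have cPpos: "card P > 0"
  proof -
    have "card I = card V" unfolding I_def using cV r_def by (simp add: card_cartesian_product mult.commute)
    then obtain h where h: "bij_betw h I V" using finite_same_card_bij[OF finI finV] by blast
    have "restrict h I \<in> P" unfolding Pdef using h
      by (auto simp: bij_betw_def inj_on_def image_def)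
    then show ?thesis using finP card_gt_0_iff by blast
  qed
  have SD: "(\<Sum>(x,y)\<in>{(x,y)\<in>V\<times>V. x \<noteq> y}. phi x y) = S"
  proof -
    have "{(x,y)\<in>V\<times>V. x \<noteq> y} = (SIGMA x:V. V - {x})" by auto
    then have "(\<Sum>(x,y)\<in>{(x,y)\<in>V\<times>V. x \<noteq> y}. phi x y) = (\<Sum>x\<in>V. \<Sum>y\<in>V - {x}. phi x y)"
      using finV by (simp add: sum.Sigma)
    also have "\<dots> = (\<Sum>x\<in>V. K x)"
    proof (rule sum.cong[OF refl])
      fix x assume x: "x \<in> V"
      have "(\<Sum>y\<in>V - {x}. phi x y) = K x / real (deg V E x) * (\<Sum>y\<in>V - {x}. (if E x y then 1 else 0))"
        unfolding phi_def by (simp add: sum_distrib_left)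
      also have "(\<Sum>y\<in>V - {x}. (if E x y then 1 else 0::real)) = real (card {y\<in>V - {x}. E x y})"
        using finV by (simp add: sum.If_cases Int_def)
      also have "{y\<in>V - {x}. E x y} = nbhd V E x" unfolding nbhd_def using irr by auto
      finally show "(\<Sum>y\<in>V - {x}. phi x y) = K x" using dpos[OF x] unfolding deg_def by simp
    qed
    finally show ?thesis unfolding S_def .
  qed
  have fib: "(\<Sum>w\<in>P. phi (w (i,j)) (w (i,k))) = real (card P) * S / (real N * (real N - 1))"
    if t: "((i,j),k) \<in> J" for i j k
  proof -
    have ab: "(i,j) \<in> I" "(i,k) \<in> I" "(i,j) \<noteq> (i,k)" using t unfolding J_def I_def by auto
    have e: "real (N * (N - 1)) = real N * (real N - 1)" using N2 by (simp add: of_nat_diff)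
    have "(\<Sum>w\<in>P. phi (w (i,j)) (w (i,k))) * (real N * (real N - 1)) = real (card P) * S"
      using fiber_sum[OF finV finI ab, of phi] unfolding Pdef[symmetric] SD N_def[symmetric] e .
    moreover have D: "real N * (real N - 1) \<noteq> 0" using N2 by simp
    ultimately show ?thesis by (simp only: nonzero_eq_divide_eq[OF D])
  qed
  have cJ: "card J = n * r * (r - 1)"
  proof -
    have "card J = (\<Sum>x\<in>I. card ((\<lambda>(i,j). {..<r}-{j}) x))" unfolding J_def
      by (rule card_SigmaI) (use finI in \<open>auto split: prod.splits\<close>)
    also have "\<dots> = (\<Sum>x\<in>I. r - 1)" by (rule sum.cong) (auto simp: I_def)
    finally show ?thesis unfolding I_def by simp
  qed
  have finJ: "finite J" unfolding J_def using finI by auto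
  define \<alpha> where "\<alpha> = 1 / (real n * real r * (real r - 1))"
  have "(\<Sum>w\<in>P. \<bar>cond_exp_xi V E f n p q w\<bar>) \<le> (\<Sum>w\<in>P. \<alpha> * (\<Sum>((i,j),k)\<in>J. phi (w (i,j)) (w (i,k))))"
  proof (rule sum_mono)
    fix w assume "w \<in> P"
    then have w: "bij_betw w ({..<n} \<times> {..<r}) V" unfolding Pdef I_def by simp
    show "\<bar>cond_exp_xi V E f n p q w\<bar> \<le> \<alpha> * (\<Sum>((i,j),k)\<in>J. phi (w (i,j)) (w (i,k)))"
      unfolding \<alpha>_def J_def I_def phi_def
      by (rule per_w[OF r_def pq(2,3,1) w irr dpos Kp lip])
  qed
  also have "\<dots> = \<alpha> * (\<Sum>((i,j),k)\<in>J. \<Sum>w\<in>P. phi (w (i,j)) (w (i,k)))"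
    by (simp add: sum_distrib_left[symmetric] case_prod_unfold sum.swap[of _ P J])
  also have "(\<Sum>((i,j),k)\<in>J. \<Sum>w\<in>P. phi (w (i,j)) (w (i,k))) = (\<Sum>t\<in>J. real (card P) * S / (real N * (real N - 1)))"
    by (rule sum.cong[OF refl]) (use fib in auto)
  also have "\<dots> = real (n * r * (r - 1)) * (real (card P) * S / (real N * (real N - 1)))"
    using cJ by simp
  also have "\<alpha> * \<dots> = real (card P) * S / (real N * (real N - 1))"
  proof -
    have "real (n * r * (r - 1)) = real n * real r * (real r - 1)" using r2 by (simp add: of_nat_diff)
    moreover have "real n * real r * (real r - 1) \<noteq> 0" using r2 pq by simp
    ultimately show ?thesis unfolding \<alpha>_def by simp
  qed
  finally have main: "(\<Sum>w\<in>P. \<bar>cond_exp_xi V E f n p q w\<bar>) \<le> real (card P) * S / (real N * (real N - 1))" .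
  have "(\<Sum>w\<in>P. \<bar>cond_exp_xi V E f n p q w\<bar>) / real (card P) \<le> S / (real N * (real N - 1))"
  proof -
    have cp: "real (card P) > 0" using cPpos by simp
    have "(\<Sum>w\<in>P. \<bar>cond_exp_xi V E f n p q w\<bar>) / real (card P) \<le> (real (card P) * S / (real N * (real N - 1))) / real (card P)"
      using main cp by (rule divide_right_mono[OF _ less_imp_le])
    also have "\<dots> = S / (real N * (real N - 1))" using cp by simp
    finally show ?thesis .
  qed
  also have "\<dots> = (S / real N) / (real N - 1)" by simp
  finally show ?thesis unfolding S_def P_def N_def r_def cV .
qed


end
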